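(* Let $n\ge r\ge1$, let $B\in\mathbb{R}^{r\times r}$ have nonnegative entries with no zero row and no zero column, let $\Theta\in\mathbb{R}^{n\times r}$ be a normalized membership matrix, and let $D_1,D_2$ be $n\times n$ diagonal matrices with positive diagonal entries such that $A=D_1\Theta B\Theta^TD_2$ has entries in $[0,1]$. Let $P$ and $Q$ be the matrices obtained by scaling the rows of $A$ and of $A^T$, respectively, so that they are row stochastic, and let $M=\Theta^TP\Theta$, $N=\Theta^TQ\Theta$. If $\beta^2<1$, then the matrix equation $$X-\frac{\beta^2}{2}\big(MXM^T+NXN^T\big)=\Theta^T(PP^T+QQ^T)\Theta$$ has a unique solution $X\in\mathbb{R}^{r\times r}$, which is symmetric positive semidefinite. Furthermore, if $B$ is invertible then $X$ is positive definite.
   Context: The nodes $\{1,\ldots,n\}$ are partitioned into $r$ nonempty blocks; $\chi^{(i)}\in\{0,1\}^n$ is the indicator vector of the $i$-th block and $n_i$ its size. The normalized membership matrix $\Theta$ has $i$-th column $\Theta e_i=\chi^{(i)}/\sqrt{n_i}$, $i=1,\ldots,r$ (so its columns are orthonormal). Thus $P=\mathrm{Diag}(A\mathbf 1)^{-1}A$ and $Q=\mathrm{Diag}(A^T\mathbf 1)^{-1}A^T$ with $\mathbf 1$ the all-ones vector. *)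

theory Defs
  imports "HOL-Analysis.Analysis"
begin

definition membership_matrix :: "('n::finite \<Rightarrow> 'r::finite) \<Rightarrow> real^'r^'n" where
  "membership_matrix c = (\<chi> i k. if c i = k then 1 / sqrt (real (card {j. c j = k})) else 0)"

definition row_normalize :: "real^'m::finite^'k::finite \<Rightarrow> real^'m^'k" where
  "row_normalize A = (\<chi> i j. A $ i $ j / (\<Sum>l\<in>UNIV. A $ i $ l))"

definition is_diagonal :: "real^'n::finite^'n \<Rightarrow> bool" where
  "is_diagonal D \<longleftrightarrow> (\<forall>i j. i \<noteq> j \<longrightarrow> D $ i $ j = 0)"

definition psd :: "real^'n::finite^'n \<Rightarrow> bool" where
  "psd X \<longleftrightarrow> transpose X = X \<and> (\<forall>v. 0 \<le> v \<bullet> (X *v v))"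

definition pos_def :: "real^'n::finite^'n \<Rightarrow> bool" where
  "pos_def X \<longleftrightarrow> transpose X = X \<and> (\<forall>v. v \<noteq> 0 \<longrightarrow> 0 < v \<bullet> (X *v v))"

end

theory Submission
  imports Defs
begin

definition bnd :: "real^'r::finite^'r \<Rightarrow> real^'r \<Rightarrow> real \<Rightarrow> bool" where
  "bnd Z s t \<longleftrightarrow> (\<forall>a b. \<bar>Z$a$b\<bar> \<le> t * s$a * s$b)"

lemma triple_entry:
  fixes M Z :: "real^'r::finite^'r"
  shows "(M ** Z ** transpose M)$a$b = (\<Sum>c\<in>UNIV. \<Sum>d\<in>UNIV. M$a$c * Z$c$d * M$b$d)"
proof -
  have "(M ** Z ** transpose M)$a$b = (\<Sum>d\<in>UNIV. \<Sum>c\<in>UNIV. M$a$c * Z$c$d * M$b$d)"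
    by (simp add: matrix_matrix_mult_def transpose_def sum_distrib_right)
  also have "\<dots> = (\<Sum>c\<in>UNIV. \<Sum>d\<in>UNIV. M$a$c * Z$c$d * M$b$d)"
    by (rule sum.swap)
  finally show ?thesis .
qed

lemma triple_sym:
  fixes M Z :: "real^'r::finite^'r"
  shows "(\<Sum>c\<in>UNIV. \<Sum>d\<in>UNIV. M$b$c * Z$c$d * M$a$d)
       = (\<Sum>c\<in>UNIV. \<Sum>d\<in>UNIV. M$a$c * (transpose Z)$c$d * M$b$d)"
proof -
  have "(\<Sum>c\<in>UNIV. \<Sum>d\<in>UNIV. M$b$c * Z$c$d * M$a$d)
       = (\<Sum>d\<in>UNIV. \<Sum>c\<in>UNIV. M$b$c * Z$c$d * M$a$d)"
    by (rule sum.swap)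
  also have "\<dots> = (\<Sum>c\<in>UNIV. \<Sum>d\<in>UNIV. M$a$c * (transpose Z)$c$d * M$b$d)"
    by (intro sum.cong refl) (simp add: transpose_def mult_ac)
  finally show ?thesis .
qed

lemma bnd_conj:
  fixes M Z :: "real^'r::finite^'r"
  assumes nn: "\<forall>a b. 0 \<le> M$a$b" and ms: "M *v s = s" and bz: "bnd Z s t"
  shows "bnd (M ** Z ** transpose M) s t"
  unfolding bnd_def
proof (intro allI)
  fix a b
  have rs: "\<And>a. (\<Sum>c\<in>UNIV. M$a$c * s$c) = s$a"
  proof -
    fix a
    have "(M *v s)$a = s$a" using ms by simp
    then show "(\<Sum>c\<in>UNIV. M$a$c * s$c) = s$a" by (simp add: matrix_vector_mult_def)
  qed
  have "\<bar>(M ** Z ** transpose M)$a$b\<bar> \<le> (\<Sum>c\<in>UNIV. \<Sum>d\<in>UNIV. \<bar>M$a$c * Z$c$d * M$b$d\<bar>)"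
    unfolding triple_entry by (rule order_trans[OF sum_abs sum_mono]) (rule sum_abs)
  also have "\<dots> \<le> (\<Sum>c\<in>UNIV. \<Sum>d\<in>UNIV. M$a$c * (t * s$c * s$d) * M$b$d)"
  proof (intro sum_mono)
    fix c d
    have "\<bar>Z$c$d\<bar> \<le> t * s$c * s$d" using bz bnd_def by blast
    then have "M$a$c * \<bar>Z$c$d\<bar> * M$b$d \<le> M$a$c * (t * s$c * s$d) * M$b$d"
      using nn by (intro mult_right_mono mult_left_mono) auto
    moreover have "\<bar>M$a$c * Z$c$d * M$b$d\<bar> = M$a$c * \<bar>Z$c$d\<bar> * M$b$d"
      using nn by (simp add: abs_mult)
    ultimately show "\<bar>M$a$c * Z$c$d * M$b$d\<bar> \<le> M$a$c * (t * s$c * s$d) * M$b$d" by simp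
  qed
  also have "\<dots> = (\<Sum>c\<in>UNIV. \<Sum>d\<in>UNIV. t * ((M$a$c * s$c) * (M$b$d * s$d)))"
    by (intro sum.cong refl) (simp add: mult_ac)
  also have "\<dots> = t * ((\<Sum>c\<in>UNIV. M$a$c * s$c) * (\<Sum>d\<in>UNIV. M$b$d * s$d))"
    by (subst sum_product) (simp add: sum_distrib_left)
  also have "\<dots> = t * s$a * s$b" by (simp add: rs)
  finally show "\<bar>(M ** Z ** transpose M)$a$b\<bar> \<le> t * s$a * s$b" .
qed

lemma pow_lim_le:
  fixes q K x :: real
  assumes "0 \<le> q" "q < 1" "\<And>k. x \<le> q^k * K"
  shows "x \<le> 0"
proof -
  have lim: "(\<lambda>k. q^k * K) \<longlonglongrightarrow> 0 * K"
    by (intro tendsto_intros) (use assms in auto)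
  show ?thesis using LIMSEQ_le_const[OF lim, of x] assms(3) by auto
qed

lemma bnd_exists:
  fixes Z :: "real^'r::finite^'r"
  assumes "\<forall>a. 0 < s$a"
  shows "\<exists>t. bnd Z s t"
proof -
  have pos: "\<And>a b. 0 < s$a * s$b" using assms by simp
  define t where "t = (\<Sum>a\<in>UNIV. \<Sum>b\<in>UNIV. \<bar>Z$a$b\<bar> / (s$a * s$b))"
  have "\<bar>Z$a$b\<bar> \<le> t * s$a * s$b" for a b
  proof -
    have "\<bar>Z$a$b\<bar> / (s$a * s$b) \<le> (\<Sum>b\<in>UNIV. \<bar>Z$a$b\<bar> / (s$a * s$b))"
      by (rule member_le_sum) (auto intro: divide_nonneg_pos pos)
    also have "\<dots> \<le> t" unfolding t_def
      by (rule member_le_sum[where f="\<lambda>a. \<Sum>b\<in>UNIV. \<bar>Z$a$b\<bar> / (s$a * s$b)"])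
         (auto intro!: sum_nonneg divide_nonneg_pos pos)
    finally have "\<bar>Z$a$b\<bar> / (s$a * s$b) \<le> t" .
    moreover have "0 < s$a * s$b" using assms by simp
    ultimately show ?thesis by (simp add: divide_le_eq mult.assoc)
  qed
  then show ?thesis unfolding bnd_def by blast
qed

lemma bnd_quad:
  fixes Z :: "real^'r::finite^'r"
  assumes "bnd Z s t"
  shows "\<bar>v \<bullet> (Z *v v)\<bar> \<le> t * (\<Sum>a\<in>UNIV. \<bar>v$a\<bar> * s$a)^2"
proof -
  have "\<bar>v \<bullet> (Z *v v)\<bar> = \<bar>\<Sum>a\<in>UNIV. \<Sum>b\<in>UNIV. v$a * Z$a$b * v$b\<bar>"
    by (simp add: inner_vec_def matrix_vector_mult_def sum_distrib_left mult.assoc)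
  also have "\<dots> \<le> (\<Sum>a\<in>UNIV. \<Sum>b\<in>UNIV. \<bar>v$a * Z$a$b * v$b\<bar>)"
    by (rule order_trans[OF sum_abs sum_mono]) (rule sum_abs)
  also have "\<dots> \<le> (\<Sum>a\<in>UNIV. \<Sum>b\<in>UNIV. \<bar>v$a\<bar> * (t * s$a * s$b) * \<bar>v$b\<bar>)"
  proof (intro sum_mono)
    fix a b
    have "\<bar>Z$a$b\<bar> \<le> t * s$a * s$b" using assms bnd_def by blast
    then have "\<bar>v$a\<bar> * \<bar>Z$a$b\<bar> * \<bar>v$b\<bar> \<le> \<bar>v$a\<bar> * (t * s$a * s$b) * \<bar>v$b\<bar>"
      by (intro mult_right_mono mult_left_mono) auto
    then show "\<bar>v$a * Z$a$b * v$b\<bar> \<le> \<bar>v$a\<bar> * (t * s$a * s$b) * \<bar>v$b\<bar>"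
      by (simp add: abs_mult)
  qed
  also have "\<dots> = (\<Sum>a\<in>UNIV. \<Sum>b\<in>UNIV. t * ((\<bar>v$a\<bar> * s$a) * (\<bar>v$b\<bar> * s$b)))"
    by (intro sum.cong refl) (simp add: mult_ac)
  also have "\<dots> = t * ((\<Sum>a\<in>UNIV. \<bar>v$a\<bar> * s$a) * (\<Sum>b\<in>UNIV. \<bar>v$b\<bar> * s$b))"
    by (subst sum_product) (simp add: sum_distrib_left)
  finally show ?thesis by (simp add: power2_eq_square mult.assoc)
qed

lemma quad_conj:
  fixes M :: "real^'k::finite^'r::finite" and Y :: "real^'k^'k"
  shows "v \<bullet> ((M ** Y ** transpose M) *v v) = (transpose M *v v) \<bullet> (Y *v (transpose M *v v))"
  by (simp add: matrix_vector_mul_assoc[symmetric] dot_lmul_matrix[symmetric])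

lemma quad_conj_nonneg:
  fixes M :: "real^'k::finite^'r::finite" and Y :: "real^'k^'k"
  assumes "\<forall>w. 0 \<le> w \<bullet> (Y *v w)"
  shows "0 \<le> v \<bullet> ((M ** Y ** transpose M) *v v)"
  using assms quad_conj by metis

lemma transpose_diff': "transpose (X - Y) = transpose X - transpose (Y::real^'m::finite^'k::finite)"
  by (simp add: vec_eq_iff transpose_def)

lemma scaleR_mv: "((r::real) *\<^sub>R (A::real^'m::finite^'k::finite)) *v v = r *\<^sub>R (A *v v)"
  by (simp add: vec_eq_iff matrix_vector_mult_def sum_distrib_left mult.assoc)

lemma abstract_main:
  fixes M N C :: "real^'r::finite^'r" and s :: "real^'r" and \<beta> :: real
  assumes Mnn: "\<forall>a b. 0 \<le> M$a$b" and Ms: "M *v s = s"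
    and Nnn: "\<forall>a b. 0 \<le> N$a$b" and Ns: "N *v s = s"
    and spos: "\<forall>a. 0 < s$a" and b1: "\<beta>\<^sup>2 < 1"
    and Csym: "transpose C = C" and Cq: "\<forall>v. 0 \<le> v \<bullet> (C *v v)"
    and Ldef: "L = (\<lambda>X. (\<beta>\<^sup>2 / 2) *\<^sub>R (M ** X ** transpose M + N ** X ** transpose N))"
  shows "(\<exists>!X. X - L X = C) \<and>
         (\<forall>X. X - L X = C \<longrightarrow> psd X \<and> (\<forall>v. v \<bullet> (C *v v) \<le> v \<bullet> (X *v v)))"
proof -
  have b0: "0 \<le> \<beta>\<^sup>2" by simp
  have Lent: "L Z $ a $ b = \<beta>\<^sup>2 / 2 * ((\<Sum>c\<in>UNIV. \<Sum>d\<in>UNIV. M$a$c * Z$c$d * M$b$d)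
        + (\<Sum>c\<in>UNIV. \<Sum>d\<in>UNIV. N$a$c * Z$c$d * N$b$d))" for Z a b
    by (simp add: Ldef triple_entry)
  have Lbnd: "bnd (L Z) s (\<beta>\<^sup>2 * t)" if "bnd Z s t" for Z t
  proof -
    have 1: "bnd (M ** Z ** transpose M) s t" "bnd (N ** Z ** transpose N) s t"
      using bnd_conj that Mnn Ms Nnn Ns by blast+
    show ?thesis unfolding bnd_def
    proof (intro allI)
      fix a b
      have "\<bar>(M ** Z ** transpose M)$a$b\<bar> \<le> t * s$a * s$b"
           "\<bar>(N ** Z ** transpose N)$a$b\<bar> \<le> t * s$a * s$b" using 1 bnd_def by blast+
      then have "\<bar>(M ** Z ** transpose M)$a$b + (N ** Z ** transpose N)$a$b\<bar> \<le> 2 * (t * s$a * s$b)"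
        by linarith
      then have "\<beta>\<^sup>2 / 2 * \<bar>(M ** Z ** transpose M)$a$b + (N ** Z ** transpose N)$a$b\<bar>
                  \<le> \<beta>\<^sup>2 / 2 * (2 * (t * s$a * s$b))"
        by (intro mult_left_mono) auto
      then show "\<bar>L Z $ a $ b\<bar> \<le> \<beta>\<^sup>2 * t * s$a * s$b"
        by (simp add: Ldef abs_mult)
    qed
  qed
  have Lzero: "Z = 0" if "Z - L Z = 0" for Z
  proof -
    have fix': "L Z = Z" using that by simp
    obtain t where t: "bnd Z s t" using bnd_exists spos by blast
    have "bnd Z s ((\<beta>\<^sup>2)^k * t)" for k
    proof (induction k)
      case 0 then show ?case using t by simp
    next
      case (Suc k)
      then have "bnd (L Z) s (\<beta>\<^sup>2 * ((\<beta>\<^sup>2)^k * t))" by (rule Lbnd)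
      then show ?case using fix' by (simp add: mult.assoc)
    qed
    then have "\<bar>Z$a$b\<bar> \<le> 0" for a b
      by (intro pow_lim_le[OF b0 b1, where K="t * s$a * s$b"]) (auto simp: bnd_def mult.assoc)
    then show ?thesis by (simp add: vec_eq_iff)
  qed
  define f where "f = (\<lambda>X. X - L X)"
  have lin: "linear f"
  proof (rule linearI)
    fix X Y :: "real^'r^'r"
    show "f (X + Y) = f X + f Y"
      by (simp add: f_def vec_eq_iff Lent sum.distrib algebra_simps)
  next
    fix r and X :: "real^'r^'r"
    show "f (r *\<^sub>R X) = r *\<^sub>R f X"
      by (simp add: f_def vec_eq_iff Lent sum_distrib_left algebra_simps)
  qed
  have injf: "inj f"
  proof (rule injI)
    fix X Y assume "f X = f Y"
    then have "f (X - Y) = 0" using linear_diff[OF lin] by simp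
    then show "X = Y" using Lzero[of "X - Y"] by (simp add: f_def)
  qed
  have "surj f" by (rule linear_inj_imp_surj[OF lin injf])
  then obtain X0 where X0: "f X0 = C" by (metis surjE)
  have uniq: "X = Y" if "X - L X = C" "Y - L Y = C" for X Y
    using injf that unfolding f_def inj_def by metis
  have Lq: "\<forall>v. 0 \<le> v \<bullet> (L Z *v v)" if "\<forall>v. 0 \<le> v \<bullet> (Z *v v)" for Z
  proof
    fix v
    have "0 \<le> v \<bullet> ((M ** Z ** transpose M) *v v)" "0 \<le> v \<bullet> ((N ** Z ** transpose N) *v v)"
      using quad_conj_nonneg that by blast+
    then show "0 \<le> v \<bullet> (L Z *v v)"
      by (simp add: Ldef scaleR_mv matrix_vector_mult_add_rdistrib inner_add_right)
  qed
  have Ltr: "transpose (L Z) = L (transpose Z)" for Z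
  proof -
    have "transpose (L Z) $ a $ b = L (transpose Z) $ a $ b" for a b
      using triple_sym[where M=M and a=a and b=b and Z=Z] triple_sym[where M=N and a=a and b=b and Z=Z]
      by (simp add: transpose_def[of "L Z"] Lent)
    then show ?thesis by (simp add: vec_eq_iff)
  qed
  show ?thesis
  proof (intro conjI allI impI)
    show "\<exists>!X. X - L X = C" using X0 uniq unfolding f_def by blast
  next
    fix X assume XC: "X - L X = C"
    have "transpose X - L (transpose X) = C"
      using XC Csym by (metis Ltr transpose_diff')
    then have sym: "transpose X = X" using uniq XC by blast
    define seq where "seq k = ((\<lambda>Z. C + L Z) ^^ k) 0" for k
    have seqq: "\<forall>v. 0 \<le> v \<bullet> (seq k *v v)" for k
    proof (induction k)
      case 0 then show ?case by (simp add: seq_def)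
    next
      case (Suc k)
      have "seq (Suc k) = C + L (seq k)" by (simp add: seq_def)
      then show ?case using Lq[OF Suc] Cq by (simp add: matrix_vector_mult_add_rdistrib inner_add_right add_nonneg_nonneg)
    qed
    obtain t where t: "bnd (seq 0 - X) s t" using bnd_exists spos by blast
    have seqb: "bnd (seq k - X) s ((\<beta>\<^sup>2)^k * t)" for k
    proof (induction k)
      case 0 then show ?case using t by simp
    next
      case (Suc k)
      have "seq (Suc k) - X = f (seq (Suc k) - X) + L (seq (Suc k) - X)" by (simp add: f_def)
      have "seq (Suc k) - X = L (seq k - X)"
      proof -
        have "seq (Suc k) = C + L (seq k)" by (simp add: seq_def)
        moreover have "X = C + L X" using XC by (simp add: algebra_simps)
        moreover have "L (seq k - X) = L (seq k) - L X"
          using linear_diff[OF lin, of "seq k" X] by (simp add: f_def algebra_simps)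
        ultimately show ?thesis by (metis add_diff_cancel_left)
      qed
      then show ?case using Lbnd[OF Suc] by (simp add: mult.assoc)
    qed
    have psdq: "0 \<le> v \<bullet> (X *v v)" for v
    proof -
      define K where "K = t * (\<Sum>a\<in>UNIV. \<bar>v$a\<bar> * s$a)^2"
      have "- (v \<bullet> (X *v v)) \<le> (\<beta>\<^sup>2)^k * K" for k
      proof -
        have "\<bar>v \<bullet> ((seq k - X) *v v)\<bar> \<le> (\<beta>\<^sup>2)^k * t * (\<Sum>a\<in>UNIV. \<bar>v$a\<bar> * s$a)^2"
          using bnd_quad[OF seqb[of k]] .
        moreover have "v \<bullet> ((seq k - X) *v v) = v \<bullet> (seq k *v v) - v \<bullet> (X *v v)"
          by (simp add: matrix_vector_mult_diff_rdistrib inner_diff_right)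
        ultimately show ?thesis using seqq[of k] unfolding K_def by (smt (verit) mult.assoc)
      qed
      then show ?thesis using pow_lim_le[OF b0 b1] by (smt (verit))
    qed
    show "psd X" unfolding psd_def using sym psdq by blast
    fix v
    have "X = C + L X" using XC by (simp add: algebra_simps)
    then have "v \<bullet> (X *v v) = v \<bullet> (C *v v) + v \<bullet> (L X *v v)"
      by (metis matrix_vector_mult_add_rdistrib inner_add_right)
    then show "v \<bullet> (C *v v) \<le> v \<bullet> (X *v v)" using Lq psdq by (smt (verit))
  qed
qed

lemma nn_mult:
  fixes X :: "real^'m::finite^'k::finite" and Y :: "real^'n::finite^'m"
  assumes "\<forall>i j. 0 \<le> X$i$j" "\<forall>i j. 0 \<le> Y$i$j"
  shows "\<forall>i j. 0 \<le> (X ** Y)$i$j"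
  using assms by (simp add: matrix_matrix_mult_def sum_nonneg)

lemma nn_transpose:
  fixes X :: "real^'m::finite^'k::finite"
  assumes "\<forall>i j. 0 \<le> X$i$j"
  shows "\<forall>i j. 0 \<le> (transpose X)$i$j"
  using assms by (simp add: transpose_def)

lemma rn_props:
  fixes A :: "real^'n::finite^'n"
  assumes "\<forall>i j. 0 \<le> A$i$j" "\<forall>i. 0 < (\<Sum>l\<in>UNIV. A$i$l)"
  shows "\<forall>i j. 0 \<le> row_normalize A $i$j" "row_normalize A *v 1 = 1"
proof -
  show "\<forall>i j. 0 \<le> row_normalize A $i$j" using assms by (simp add: row_normalize_def less_imp_le)
  have "(\<Sum>l\<in>UNIV. A$i$l) \<noteq> 0" for i using assms(2) by (metis less_irrefl)
  then show "row_normalize A *v 1 = 1"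
    by (simp add: row_normalize_def vec_eq_iff matrix_vector_mult_def sum_divide_distrib[symmetric])
qed

lemma diag_left:
  assumes "is_diagonal D"
  shows "(D ** X)$i$j = D$i$i * X$i$j"
proof -
  have "(\<Sum>k\<in>UNIV. D$i$k * X$k$j) = (\<Sum>k\<in>UNIV. if k = i then D$i$i * X$i$j else 0)"
    by (rule sum.cong) (use assms in \<open>auto simp: is_diagonal_def\<close>)
  then show ?thesis by (simp add: matrix_matrix_mult_def)
qed

lemma diag_right:
  assumes "is_diagonal D"
  shows "(X ** D)$i$j = X$i$j * D$j$j"
proof -
  have "(\<Sum>k\<in>UNIV. X$i$k * D$k$j) = (\<Sum>k\<in>UNIV. if k = j then X$i$j * D$j$j else 0)"
    by (rule sum.cong) (use assms in \<open>auto simp: is_diagonal_def\<close>)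
  then show ?thesis by (simp add: matrix_matrix_mult_def)
qed

lemma transpose_add': "transpose (X + Y) = transpose X + transpose (Y::real^'m::finite^'k::finite)"
  by (simp add: vec_eq_iff transpose_def)

lemma sq_quad_nonneg:
  fixes P :: "real^'m::finite^'k::finite"
  shows "0 \<le> w \<bullet> ((P ** transpose P) *v w)"
  by (simp add: matrix_vector_mul_assoc[symmetric] dot_lmul_matrix[symmetric])

lemma sq_quad:
  fixes P :: "real^'m::finite^'k::finite"
  shows "w \<bullet> ((P ** transpose P) *v w) = (transpose P *v w) \<bullet> (transpose P *v w)"
  by (simp add: matrix_vector_mul_assoc[symmetric] dot_lmul_matrix[symmetric])

lemma memb_entry:
  "membership_matrix c $ i $ k = (if c i = k then 1 / sqrt (real (card {j. c j = k})) else 0)"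
  by (simp add: membership_matrix_def)

lemma memb_B:
  fixes B :: "real^'m::finite^'r::finite" and c :: "'n::finite \<Rightarrow> 'r"
  shows "(membership_matrix c ** B)$i$j = 1 / sqrt (real (card {l. c l = c i})) * B$(c i)$j"
  by (simp add: matrix_matrix_mult_def memb_entry if_distrib if_distribR cong: if_cong)

lemma memb_BT:
  fixes B :: "real^'r::finite^'r::finite" and c :: "'n::finite \<Rightarrow> 'r"
  shows "(membership_matrix c ** B ** transpose (membership_matrix c))$i$j =
     1 / sqrt (real (card {l. c l = c i})) * B$(c i)$(c j) * (1 / sqrt (real (card {l. c l = c j})))"
  by (simp add: matrix_matrix_mult_def[of "membership_matrix c ** B"] memb_B transpose_def memb_entry
       if_distrib if_distribR cong: if_cong)

lemma memb_s:
  fixes c :: "'n::finite \<Rightarrow> 'r::finite"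
  assumes "surj c"
  shows "membership_matrix c *v (\<chi> k. sqrt (real (card {j. c j = k}))) = 1"
    and "transpose (membership_matrix c) *v 1 = (\<chi> k. sqrt (real (card {j. c j = k})))"
proof -
  have cp: "0 < card {j. c j = k}" for k
  proof -
    obtain j where "c j = k" using assms by (metis surjD)
    then show ?thesis by (auto simp: card_gt_0_iff)
  qed
  have e1: "(membership_matrix c *v (\<chi> k. sqrt (real (card {j. c j = k}))))$i = 1" for i
  proof -
    have "(membership_matrix c *v (\<chi> k. sqrt (real (card {j. c j = k}))))$i
        = (\<Sum>k\<in>UNIV. if k = c i then 1 / sqrt (real (card {j. c j = k})) * sqrt (real (card {j. c j = k})) else 0)"
      unfolding matrix_vector_mult_def vec_lambda_beta by (rule sum.cong) (auto simp: memb_entry)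
    also have "\<dots> = 1" using cp[of "c i"] by (simp, blast)
    finally show ?thesis .
  qed
  then show "membership_matrix c *v (\<chi> k. sqrt (real (card {j. c j = k}))) = 1"
    by (simp add: vec_eq_iff)
  have e2: "(transpose (membership_matrix c) *v 1)$k = sqrt (real (card {j. c j = k}))" for k
  proof -
    have "(transpose (membership_matrix c) *v 1)$k
        = (\<Sum>i\<in>UNIV. if c i = k then 1 / sqrt (real (card {j. c j = k})) else 0)"
      unfolding matrix_vector_mult_def by (simp add: transpose_def memb_entry)
    also have "\<dots> = (\<Sum>i\<in>{x\<in>UNIV. c x = k}. 1 / sqrt (real (card {j. c j = k})))"
      by (rule sum.inter_filter[symmetric]) simp
    also have "\<dots> = real (card {j. c j = k}) / sqrt (real (card {j. c j = k}))"
      by simp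
    also have "\<dots> = sqrt (real (card {j. c j = k}))" by (rule real_div_sqrt) simp
    finally show ?thesis .
  qed
  then show "transpose (membership_matrix c) *v 1 = (\<chi> k. sqrt (real (card {j. c j = k})))"
    by (simp add: vec_eq_iff)
qed

lemma PT_inj:
  fixes c :: "'n::finite \<Rightarrow> 'r::finite" and B :: "real^'r^'r" and A :: "real^'n^'n"
    and T :: "real^'r^'n" and D1 D2 :: "real^'n^'n" and v :: "real^'r"
  assumes sc: "surj c" and th: "\<forall>k. 0 < \<theta> k"
    and Tent: "\<forall>i k. T$i$k = (if c i = k then \<theta> k else 0)"
    and D1p: "\<forall>i. 0 < D1$i$i" and D2p: "\<forall>i. 0 < D2$i$i"
    and Binv: "invertible B"
    and Aent: "\<forall>i j. A$i$j = D1$i$i * \<theta> (c i) * B$(c i)$(c j) * \<theta> (c j) * D2$j$j"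
    and rpos: "\<forall>i. 0 < (\<Sum>l\<in>UNIV. A$i$l)"
    and v0: "v \<noteq> 0"
  shows "transpose (row_normalize A) *v (T *v v) \<noteq> 0"
proof
  assume Z: "transpose (row_normalize A) *v (T *v v) = 0"
  define r where "r i = (\<Sum>l\<in>UNIV. A$i$l)" for i
  define g where "g i = D1$i$i * \<theta> (c i) * \<theta> (c i) / r i" for i
  define W where "W k = (\<Sum>i\<in>{x\<in>UNIV. c x = k}. g i)" for k
  define w where "w = T *v v"
  have w: "w$i = \<theta> (c i) * v$(c i)" for i
    by (simp add: w_def matrix_vector_mult_def Tent[rule_format] if_distrib if_distribR cong: if_cong)
  have ent: "(transpose (row_normalize A) *v w)$j
      = \<theta> (c j) * D2$j$j * (\<Sum>k\<in>UNIV. B$k$(c j) * (W k * v$k))" for j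
  proof -
    have "(transpose (row_normalize A) *v w)$j = (\<Sum>i\<in>UNIV. A$i$j / r i * w$i)"
      by (simp add: matrix_vector_mult_def transpose_def row_normalize_def r_def)
    also have "\<dots> = (\<Sum>i\<in>UNIV. A$i$j / r i * (\<theta> (c i) * v$(c i)))"
      by (simp add: w)
    also have "\<dots> = (\<Sum>i\<in>UNIV. \<theta> (c j) * D2$j$j * (g i * (B$(c i)$(c j) * v$(c i))))"
      by (rule sum.cong) (auto simp: Aent g_def)
    also have "\<dots> = \<theta> (c j) * D2$j$j * (\<Sum>i\<in>UNIV. g i * (B$(c i)$(c j) * v$(c i)))"
      by (simp add: sum_distrib_left)
    also have "(\<Sum>i\<in>UNIV. g i * (B$(c i)$(c j) * v$(c i)))
        = (\<Sum>k\<in>UNIV. \<Sum>i\<in>{x\<in>UNIV. c x = k}. g i * (B$(c i)$(c j) * v$(c i)))"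
      by (rule sum.group[symmetric]) auto
    also have "\<dots> = (\<Sum>k\<in>UNIV. \<Sum>i\<in>{x\<in>UNIV. c x = k}. g i * (B$k$(c j) * v$k))"
      by (intro sum.cong) auto
    also have "\<dots> = (\<Sum>k\<in>UNIV. B$k$(c j) * (W k * v$k))"
      unfolding W_def sum_distrib_right sum_distrib_left by (intro sum.cong refl) (simp add: mult_ac)
    finally show ?thesis .
  qed
  define u where "u = (\<chi> k. W k * v$k)"
  have "transpose B *v u = 0"
  proof -
    have "(transpose B *v u)$l = 0" for l
    proof -
      obtain j where j: "c j = l" using sc by (metis surjD)
      have "\<theta> (c j) * D2$j$j * (\<Sum>k\<in>UNIV. B$k$(c j) * (W k * v$k)) = 0"
        using Z ent[of j] unfolding w_def by (metis zero_index)
      moreover have "\<theta> (c j) * D2$j$j \<noteq> 0" using th D2p by (metis mult_pos_pos less_irrefl)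
      ultimately have "(\<Sum>k\<in>UNIV. B$k$(c j) * (W k * v$k)) = 0" by simp
      then show ?thesis using j by (simp add: matrix_vector_mult_def transpose_def u_def)
    qed
    then show ?thesis by (simp add: vec_eq_iff)
  qed
  moreover have "\<forall>x. transpose B *v x = 0 \<longrightarrow> x = 0"
  proof -
    obtain B' where "B ** B' = mat 1" using Binv unfolding invertible_def by blast
    then have "transpose B' ** transpose B = mat 1" by (metis matrix_transpose_mul transpose_mat)
    then show ?thesis using matrix_left_invertible_ker by blast
  qed
  ultimately have u0: "u = 0" by blast
  have "W k > 0" for k
  proof -
    obtain j where j: "c j = k" using sc by (metis surjD)
    have "0 < g i" for i
      using th D1p rpos by (simp add: g_def r_def)
    then show ?thesis unfolding W_def using j by (intro sum_pos) auto
  qed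
  then have "v = 0" using u0 by (simp add: u_def vec_eq_iff) (metis less_irrefl)
  then show False using v0 by simp
qed

theorem lemma4:
  fixes c :: "'n::finite \<Rightarrow> 'r::finite"
    and B :: "real^'r^'r"
    and D1 D2 :: "real^'n^'n"
    and \<beta> :: real
  assumes "CARD('r) \<le> CARD('n)"
    and "surj c"
    and "\<forall>i j. 0 \<le> B $ i $ j"
    and "\<forall>i. \<exists>j. B $ i $ j \<noteq> 0"
    and "\<forall>j. \<exists>i. B $ i $ j \<noteq> 0"
    and "is_diagonal D1" and "\<forall>i. 0 < D1 $ i $ i"
    and "is_diagonal D2" and "\<forall>i. 0 < D2 $ i $ i"
    and "\<forall>i j. 0 \<le> (D1 ** membership_matrix c ** B ** transpose (membership_matrix c) ** D2) $ i $ j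
              \<and> (D1 ** membership_matrix c ** B ** transpose (membership_matrix c) ** D2) $ i $ j \<le> 1"
    and "\<beta>\<^sup>2 < 1"
  shows "let \<Theta> = membership_matrix c;
             A = D1 ** \<Theta> ** B ** transpose \<Theta> ** D2;
             P = row_normalize A;
             Q = row_normalize (transpose A);
             M = transpose \<Theta> ** P ** \<Theta>;
             N = transpose \<Theta> ** Q ** \<Theta>;
             eqn = (\<lambda>X::real^'r^'r. X - (\<beta>\<^sup>2 / 2) *\<^sub>R (M ** X ** transpose M + N ** X ** transpose N)
                        = transpose \<Theta> ** (P ** transpose P + Q ** transpose Q) ** \<Theta>)
         in (\<exists>!X. eqn X) \<and>
            (\<forall>X. eqn X \<longrightarrow> psd X \<and> (invertible B \<longrightarrow> pos_def X))"
proof -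
  let ?T = "membership_matrix c"
  let ?A = "D1 ** ?T ** B ** transpose ?T ** D2"
  let ?P = "row_normalize ?A"
  let ?Q = "row_normalize (transpose ?A)"
  let ?M = "transpose ?T ** ?P ** ?T"
  let ?N = "transpose ?T ** ?Q ** ?T"
  let ?C = "transpose ?T ** (?P ** transpose ?P + ?Q ** transpose ?Q) ** ?T"
  let ?L = "\<lambda>X::real^'r^'r. (\<beta>\<^sup>2 / 2) *\<^sub>R (?M ** X ** transpose ?M + ?N ** X ** transpose ?N)"
  define \<theta> where "\<theta> k = 1 / sqrt (real (card {j. c j = k}))" for k
  define s where "s = (\<chi> k. sqrt (real (card {j. c j = k}))) "
  have cp: "0 < card {j. c j = k}" for k
  proof -
    obtain j where "c j = k" using assms(2) by (metis surjD)
    then show ?thesis by (auto simp: card_gt_0_iff)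
  qed
  have th: "\<forall>k. 0 < \<theta> k" using cp by (simp add: \<theta>_def)
  have Tent: "\<forall>i k. ?T$i$k = (if c i = k then \<theta> k else 0)"
    by (simp add: memb_entry \<theta>_def)
  have Tnn: "\<forall>i k. 0 \<le> ?T$i$k" using Tent th by (simp add: less_imp_le)
  have Aent: "\<forall>i j. ?A$i$j = D1$i$i * \<theta> (c i) * B$(c i)$(c j) * \<theta> (c j) * D2$j$j"
  proof (intro allI)
    fix i j
    have "?A = (D1 ** (?T ** B ** transpose ?T)) ** D2" by (simp add: matrix_mul_assoc)
    then show "?A$i$j = D1$i$i * \<theta> (c i) * B$(c i)$(c j) * \<theta> (c j) * D2$j$j"
      using assms(6,8) by (simp add: diag_right diag_left memb_BT \<theta>_def)
  qed
  have Ann: "\<forall>i j. 0 \<le> ?A$i$j" using assms(10) by blast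
  have Apos: "0 < ?A$i$j" if "B$(c i)$(c j) \<noteq> 0" for i j
  proof -
    have "0 < B$(c i)$(c j)" using that assms(3) by (metis less_eq_real_def)
    then show ?thesis using Aent th assms(7,9) by simp
  qed
  have rpos: "\<forall>i. 0 < (\<Sum>l\<in>UNIV. ?A$i$l)"
  proof
    fix i
    obtain l where l: "B$(c i)$l \<noteq> 0" using assms(4) by blast
    obtain j where j: "c j = l" using assms(2) by (metis surjD)
    have "?A$i$j \<le> (\<Sum>l\<in>UNIV. ?A$i$l)" by (rule member_le_sum) (use Ann in auto)
    then show "0 < (\<Sum>l\<in>UNIV. ?A$i$l)" using Apos[of i j] l j by simp
  qed
  have cpos: "\<forall>i. 0 < (\<Sum>l\<in>UNIV. transpose ?A$i$l)"
  proof
    fix j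
    obtain l where l: "B$l$(c j) \<noteq> 0" using assms(5) by blast
    obtain i where i: "c i = l" using assms(2) by (metis surjD)
    have "?A$i$j \<le> (\<Sum>l\<in>UNIV. ?A$l$j)"
      by (rule member_le_sum[where f="\<lambda>l. ?A$l$j"]) (use Ann in auto)
    moreover have "(\<Sum>l\<in>UNIV. transpose ?A$j$l) = (\<Sum>l\<in>UNIV. ?A$l$j)"
      by (simp add: transpose_def)
    ultimately have "?A$i$j \<le> (\<Sum>l\<in>UNIV. transpose ?A$j$l)" by simp
    then show "0 < (\<Sum>l\<in>UNIV. transpose ?A$j$l)" using Apos[of i j] l i by simp
  qed
  have Pp: "\<forall>i j. 0 \<le> ?P$i$j" "?P *v 1 = 1" using rn_props[OF Ann rpos] by auto
  have Qp: "\<forall>i j. 0 \<le> ?Q$i$j" "?Q *v 1 = 1"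
    using rn_props[OF nn_transpose[OF Ann] cpos] by auto
  have Ts: "?T *v s = 1" "transpose ?T *v 1 = s" using memb_s[OF assms(2)] by (auto simp: s_def)
  have Mnn: "\<forall>a b. 0 \<le> ?M$a$b" by (intro nn_mult nn_transpose Tnn Pp)
  have Nnn: "\<forall>a b. 0 \<le> ?N$a$b" by (intro nn_mult nn_transpose Tnn Qp)
  have Ms: "?M *v s = s" using Ts Pp by (simp add: matrix_vector_mul_assoc[symmetric])
  have Ns: "?N *v s = s" using Ts Qp by (simp add: matrix_vector_mul_assoc[symmetric])
  have spos: "\<forall>a. 0 < s$a" using cp by (simp add: s_def)
  have Csym: "transpose ?C = ?C"
    by (simp add: matrix_transpose_mul transpose_add' matrix_mul_assoc)
  have Cq': "v \<bullet> (?C *v v) = (?T *v v) \<bullet> ((?P ** transpose ?P) *v (?T *v v))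
      + (?T *v v) \<bullet> ((?Q ** transpose ?Q) *v (?T *v v))" for v
    using quad_conj[of v "transpose ?T" "?P ** transpose ?P + ?Q ** transpose ?Q"]
    by (simp add: matrix_vector_mult_add_rdistrib inner_add_right)
  have Cq: "\<forall>v. 0 \<le> v \<bullet> (?C *v v)"
    using Cq' sq_quad_nonneg by (metis add_nonneg_nonneg)
  have main: "(\<exists>!X. X - ?L X = ?C) \<and>
         (\<forall>X. X - ?L X = ?C \<longrightarrow> psd X \<and> (\<forall>v. v \<bullet> (?C *v v) \<le> v \<bullet> (X *v v)))"
    by (rule abstract_main[OF Mnn Ms Nnn Ns spos assms(11) Csym Cq refl])
  have pd: "pos_def X" if "X - ?L X = ?C" "invertible B" for X
  proof -
    have ps: "psd X" and ge: "\<forall>v. v \<bullet> (?C *v v) \<le> v \<bullet> (X *v v)" using main that(1) by blast+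
    have "0 < v \<bullet> (X *v v)" if v0: "v \<noteq> 0" for v
    proof -
      have ne: "transpose ?P *v (?T *v v) \<noteq> 0"
        by (rule PT_inj[OF assms(2) th Tent assms(7) assms(9) \<open>invertible B\<close> Aent rpos v0])
      have "0 < (transpose ?P *v (?T *v v)) \<bullet> (transpose ?P *v (?T *v v))"
        using ne by simp
      then have "0 < v \<bullet> (?C *v v)"
        using Cq'[of v] sq_quad[of "?T *v v" ?P] sq_quad_nonneg[of "?T *v v" ?Q] by linarith
      then show ?thesis using ge by (meson less_le_trans)
    qed
    then show ?thesis using ps unfolding psd_def pos_def_def by blast
  qed
  show ?thesis unfolding Let_def using main pd by blast
qed

end
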